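(* Consider the Random Apollonian Network process, and let $Z_k(t)$ denote the number of vertices of degree $k$ after $t$ steps, $k \geq 3$. For any $k \geq 3$ there exists a constant $b_k$ (depending on $k$) such that for $t$ sufficiently large $$ |\mathbb{E}[Z_k(t)] - b_k t| \leq K, \quad\text{where } K=3.6.$$ Furthermore, let $\lambda>0$. For any $k \geq 3$, $$\Pr\big(|Z_k(t) - \mathbb{E}[Z_k(t)]| \geq \lambda\big) \leq 2e^{-\frac{\lambda^2}{72t}}.$$
   Context: A Random Apollonian Network (RAN) is generated as follows: start (at time $t=0$) with a single triangular face (a triangle in the plane). At each step $t=1,2,\dots$, pick one of the current (bounded) triangular faces uniformly at random, insert a new vertex inside it, and connect the new vertex to the three vertices on the boundary of that face; this subdivides the chosen face into three new triangular faces. Thus after $t$ steps there are $2t+1$ triangular faces. $Z_k(t)$ is the (random) number of vertices of degree exactly $k$ in the graph after $t$ steps. *)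

theory Defs
  imports "HOL-Probability.Probability"
begin

text \<open>Vertices are natural numbers 0,1,2,...; the
 initial triangle has vertices 0,1,2; the vertex inserted at step t is t+2.
 A state records the number of vertices, the list of current (bounded)
 triangular faces, and the set of (undirected) edges as 2-element sets.\<close>

record ran_state =
  nverts :: nat
  faces :: "(nat \<times> nat \<times> nat) list"
  edges :: "nat set set"

definition ran_init :: ran_state where
  "ran_init = \<lparr> nverts = 3, faces = [(0,1,2)], edges = {{0,1},{1,2},{0,2}} \<rparr>"

definition ran_insert :: "ran_state \<Rightarrow> nat \<Rightarrow> ran_state" where
  "ran_insert s i =
     (case faces s ! i of (a, b, c) \<Rightarrow>
        let v = nverts s in
        \<lparr> nverts = Suc v,
          faces = (faces s)[i := (a, b, v)] @ [(a, v, c), (v, b, c)],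
          edges = edges s \<union> {{a, v}, {b, v}, {c, v}} \<rparr>)"

definition ran_step :: "ran_state \<Rightarrow> ran_state pmf" where
  "ran_step s = map_pmf (ran_insert s) (pmf_of_set {..<length (faces s)})"

primrec RAN :: "nat \<Rightarrow> ran_state pmf" where
  "RAN 0 = return_pmf ran_init"
| "RAN (Suc t) = bind_pmf (RAN t) ran_step"

definition degree :: "ran_state \<Rightarrow> nat \<Rightarrow> nat" where
  "degree s v = card {e \<in> edges s. v \<in> e}"

definition Z :: "nat \<Rightarrow> ran_state \<Rightarrow> nat" where
  "Z k s = card {v. v < nverts s \<and> degree s v = k}"

end

theory Submission
  imports Defs
begin


definition tset :: "nat \<times> nat \<times> nat \<Rightarrow> nat set" where
  "tset f = (case f of (a,b,c) \<Rightarrow> {a,b,c})"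
definition dist3 :: "nat \<times> nat \<times> nat \<Rightarrow> bool" where
  "dist3 f = (case f of (a,b,c) \<Rightarrow> a\<noteq>b \<and> a\<noteq>c \<and> b\<noteq>c)"
definition ind :: "nat \<Rightarrow> nat \<times> nat \<times> nat \<Rightarrow> nat" where
  "ind u f = (if u \<in> tset f then 1 else 0)"
definition fc :: "ran_state \<Rightarrow> nat \<Rightarrow> nat" where
  "fc s u = sum_list (map (ind u) (faces s))"

definition rinv :: "ran_state \<Rightarrow> bool" where
  "rinv s \<longleftrightarrow> finite (edges s) \<and> (\<forall>e\<in>edges s. \<forall>u\<in>e. u < nverts s)
    \<and> (\<forall>f\<in>set (faces s). dist3 f \<and> (\<forall>u\<in>tset f. u < nverts s))
    \<and> nverts s \<ge> 3 \<and> length (faces s) = 2 * nverts s - 5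
    \<and> (\<forall>u<nverts s. degree s u = fc s u + (if u < 3 then 1 else 0))
    \<and> (\<forall>u. 3 \<le> u \<and> u < nverts s \<longrightarrow> degree s u \<ge> 3)"

lemma ran_insert_eq:
  assumes "faces s ! i = (a,b,c)"
  shows "ran_insert s i = \<lparr> nverts = Suc (nverts s),
          faces = (faces s)[i := (a, b, nverts s)] @ [(a, nverts s, c), (nverts s, b, c)],
          edges = edges s \<union> {{a, nverts s}, {b, nverts s}, {c, nverts s}} \<rparr>"
  using assms by (simp add: ran_insert_def Let_def)

lemma degree_insert:
  assumes I: "rinv s" and i: "i < length (faces s)"
  shows "degree (ran_insert s i) u =
     (if u = nverts s then 3 else degree s u + (if u \<in> tset (faces s ! i) then 1 else 0))"
proof -
  obtain a b c where abc: "faces s ! i = (a,b,c)" by (metis prod_cases3)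
  define v where "v = nverts s"
  have fin: "finite (edges s)" and ev: "\<forall>e\<in>edges s. \<forall>u\<in>e. u < v"
    using I by (auto simp: rinv_def v_def)
  have "faces s ! i \<in> set (faces s)" using i by simp
  hence d: "a \<noteq> b" "a \<noteq> c" "b \<noteq> c" and lt: "a < v" "b < v" "c < v"
    using I abc by (auto simp: rinv_def dist3_def tset_def v_def)
  define N where "N = {{a, v}, {b, v}, {c, v}}"
  have ed: "edges (ran_insert s i) = edges s \<union> N"
    using abc by (simp add: ran_insert_eq N_def v_def)
  have disj: "edges s \<inter> N = {}" using ev by (auto simp: N_def)
  have split: "{e \<in> edges s \<union> N. u \<in> e} = {e \<in> edges s. u \<in> e} \<union> {e\<in>N. u \<in> e}" by auto
  have c1: "card {e \<in> edges s \<union> N. u \<in> e} = card {e \<in> edges s. u \<in> e} + card {e\<in>N. u \<in> e}"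
    unfolding split by (rule card_Un_disjoint) (use fin disj in \<open>auto simp: N_def\<close>)
  show ?thesis
  proof (cases "u = v")
    case True
    have e0: "{e \<in> edges s. u \<in> e} = {}" using ev True by auto
    have e1: "{e\<in>N. u \<in> e} = N" using True by (auto simp: N_def)
    have e2: "card N = 3" using d lt by (auto simp: N_def doubleton_eq_iff)
    have "degree (ran_insert s i) u = 3"
      unfolding degree_def ed c1 e0 e1 e2 by simp
    thus ?thesis using True v_def by simp
  next
    case False
    have "{e\<in>N. u \<in> e} = (if u \<in> {a,b,c} then {{u,v}} else {})"
      using False by (auto simp: N_def)
    then have "card {e\<in>N. u \<in> e} = (if u \<in> tset (faces s ! i) then 1 else 0)"
      by (simp add: abc tset_def)
    thus ?thesis using c1 False by (simp add: degree_def ed v_def)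
  qed
qed

lemma sum_ind_0: "(\<forall>f\<in>set xs. u \<notin> tset f) \<Longrightarrow> sum_list (map (ind u) xs) = 0"
  by (induction xs) (auto simp: ind_def)

lemma fc_insert:
  assumes I: "rinv s" and i: "i < length (faces s)"
  shows "fc (ran_insert s i) u =
     (if u = nverts s then 3 else fc s u + (if u \<in> tset (faces s ! i) then 1 else 0))"
proof -
  obtain a b c where abc: "faces s ! i = (a,b,c)" by (metis prod_cases3)
  define v where "v = nverts s"
  have "faces s ! i \<in> set (faces s)" using i by simp
  hence d: "a \<noteq> b" "a \<noteq> c" "b \<noteq> c" and lt: "a < v" "b < v" "c < v"
    using I abc by (auto simp: rinv_def dist3_def tset_def v_def)
  have fv: "\<forall>f\<in>set (faces s). \<forall>u\<in>tset f. u < v" using I by (auto simp: rinv_def v_def)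
  have "fc (ran_insert s i) u = sum_list ((map (ind u) (faces s))[i := ind u (a,b,v)])
        + ind u (a,v,c) + ind u (v,b,c)"
    by (simp add: fc_def ran_insert_eq[OF abc] v_def map_update)
  also have "sum_list ((map (ind u) (faces s))[i := ind u (a,b,v)]) =
       fc s u + ind u (a,b,v) - ind u (a,b,c)"
    using i abc by (simp add: sum_list_update fc_def)
  finally have eq: "fc (ran_insert s i) u = fc s u + ind u (a,b,v) - ind u (a,b,c) + ind u (a,v,c) + ind u (v,b,c)" .
  have le: "ind u (a,b,c) \<le> fc s u"
  proof -
    have "ind u (a,b,c) = map (ind u) (faces s) ! i" using i abc by simp
    also have "\<dots> \<le> fc s u" unfolding fc_def using i by (intro elem_le_sum_list) simp
    finally show ?thesis .
  qed
  show ?thesis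
  proof (cases "u = v")
    case True
    have "fc s u = 0" unfolding fc_def using fv True by (intro sum_ind_0) auto
    thus ?thesis using eq True lt by (simp add: ind_def tset_def v_def)
  next
    case False
    thus ?thesis using eq le d abc by (auto simp: ind_def tset_def v_def)
  qed
qed

lemma inv_insert:
  assumes I: "rinv s" and i: "i < length (faces s)"
  shows "rinv (ran_insert s i)"
proof -
  obtain a b c where abc: "faces s ! i = (a,b,c)" by (metis prod_cases3)
  define v where "v = nverts s"
  have I1: "finite (edges s)" and I2: "\<forall>e\<in>edges s. \<forall>u\<in>e. u < v"
    and I3: "\<forall>f\<in>set (faces s). dist3 f \<and> (\<forall>u\<in>tset f. u < v)"
    and I4: "v \<ge> 3" "length (faces s) = 2 * v - 5"
    and I5: "\<forall>u<v. degree s u = fc s u + (if u < 3 then 1 else 0)"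
    and I6: "\<forall>u. 3 \<le> u \<and> u < v \<longrightarrow> degree s u \<ge> 3"
    using I unfolding rinv_def v_def by blast+
  have "faces s ! i \<in> set (faces s)" using i by simp
  hence d: "a \<noteq> b" "a \<noteq> c" "b \<noteq> c" and lt: "a < v" "b < v" "c < v"
    using I3 abc by (auto simp: dist3_def tset_def)
  have R: "ran_insert s i = \<lparr> nverts = Suc v,
          faces = (faces s)[i := (a, b, v)] @ [(a, v, c), (v, b, c)],
          edges = edges s \<union> {{a, v}, {b, v}, {c, v}} \<rparr>"
    using ran_insert_eq[OF abc] v_def by simp
  have f1: "finite (edges (ran_insert s i))" using I1 by (simp add: R)
  have f2: "\<forall>e\<in>edges (ran_insert s i). \<forall>u\<in>e. u < nverts (ran_insert s i)"
    using I2 lt by (auto simp: R less_Suc_eq)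
  have f3: "\<forall>f\<in>set (faces (ran_insert s i)). dist3 f \<and> (\<forall>u\<in>tset f. u < nverts (ran_insert s i))"
  proof
    fix f assume "f \<in> set (faces (ran_insert s i))"
    hence "f \<in> set (faces s) \<or> f = (a,b,v) \<or> f = (a,v,c) \<or> f = (v,b,c)"
      unfolding R using set_update_subset_insert by fastforce
    moreover have "dist3 (a,b,v)" "dist3 (a,v,c)" "dist3 (v,b,c)" using d lt by (auto simp: dist3_def)
    moreover have "\<forall>f\<in>{(a,b,v),(a,v,c),(v,b,c)}. \<forall>u\<in>tset f. u < Suc v" using lt by (auto simp: tset_def)
    ultimately show "dist3 f \<and> (\<forall>u\<in>tset f. u < nverts (ran_insert s i))"
      using I3 by (fastforce simp: R less_Suc_eq)
  qed
  have f4: "nverts (ran_insert s i) \<ge> 3" "length (faces (ran_insert s i)) = 2 * nverts (ran_insert s i) - 5"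
    using I4 by (auto simp: R)
  have f5: "\<forall>u<nverts (ran_insert s i). degree (ran_insert s i) u = fc (ran_insert s i) u + (if u < 3 then 1 else 0)"
  proof (intro allI impI)
    fix u assume "u < nverts (ran_insert s i)"
    hence "u < v \<or> u = v" by (auto simp: R)
    thus "degree (ran_insert s i) u = fc (ran_insert s i) u + (if u < 3 then 1 else 0)"
      using I5 I4 by (auto simp: degree_insert[OF I i] fc_insert[OF I i] v_def)
  qed
  have f6: "\<forall>u. 3 \<le> u \<and> u < nverts (ran_insert s i) \<longrightarrow> degree (ran_insert s i) u \<ge> 3"
  proof (intro allI impI)
    fix u assume "3 \<le> u \<and> u < nverts (ran_insert s i)"
    hence "3 \<le> u" "u < v \<or> u = v" by (auto simp: R)
    thus "degree (ran_insert s i) u \<ge> 3"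
      using I6 by (auto simp: degree_insert[OF I i] v_def)
  qed
  show ?thesis using f1 f2 f3 f4 f5 f6 unfolding rinv_def by blast
qed

lemma degree_init: "u < 3 \<Longrightarrow> degree ran_init u = 2"
proof -
  assume "u < 3"
  hence "u = 0 \<or> u = 1 \<or> u = 2" by auto
  moreover have "{e \<in> {{0,1},{1,2},{0,2::nat}}. 0 \<in> e} = {{0,1},{0,2}}" by auto
  moreover have "{e \<in> {{0,1},{1,2},{0,2::nat}}. 1 \<in> e} = {{0,1},{1,2}}" by auto
  moreover have "{e \<in> {{0,1},{1,2},{0,2::nat}}. 2 \<in> e} = {{1,2},{0,2}}" by auto
  moreover have "card {{0,1},{0,2::nat}} = 2" "card {{0,1},{1,2::nat}} = 2" "card {{1,2},{0,2::nat}} = 2"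
    by (simp_all add: doubleton_eq_iff)
  ultimately show ?thesis unfolding degree_def ran_init_def by (elim disjE) simp_all
qed

lemma inv_init: "rinv ran_init"
proof -
  have "\<forall>u<3. degree ran_init u = fc ran_init u + (if u < 3 then 1 else 0)"
  proof (intro allI impI)
    fix u :: nat assume u: "u < 3"
    hence "fc ran_init u = 1" using u by (auto simp: fc_def ran_init_def ind_def tset_def)
    thus "degree ran_init u = fc ran_init u + (if u < 3 then 1 else 0)" using degree_init[OF u] u by simp
  qed
  moreover have "\<forall>e\<in>edges ran_init. \<forall>u\<in>e. u < nverts ran_init" by (auto simp: ran_init_def)
  ultimately show ?thesis unfolding rinv_def by (auto simp: ran_init_def dist3_def tset_def)
qed



definition G :: "nat \<Rightarrow> ran_state \<Rightarrow> nat \<Rightarrow> real" where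
  "G j s u = (if degree s u = j then 1 else 0)"
definition ob :: "nat \<Rightarrow> ran_state \<Rightarrow> real" where
  "ob j s = (\<Sum>u<3. G j s u)"

lemma Z_sum: "real (Z k s) = (\<Sum>u<nverts s. G k s u)"
proof -
  have e: "{v. v < nverts s \<and> degree s v = k} = {..<nverts s} \<inter> {u. degree s u = k}" by auto
  have "real (Z k s) = (\<Sum>u\<in>{..<nverts s} \<inter> {u. degree s u = k}. 1)"
    unfolding Z_def e by simp
  also have "\<dots> = (\<Sum>u<nverts s. G k s u)"
    by (subst sum.inter_restrict) (auto simp: G_def intro!: sum.cong)
  finally show ?thesis .
qed

lemma fc_sum: "real (fc s u) = (\<Sum>i<length (faces s). real (ind u (faces s ! i)))"
proof -
  have "fc s u = (\<Sum>i<length (faces s). ind u (faces s ! i))"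
    unfolding fc_def by (simp add: sum_list_sum_nth atLeast0LessThan)
  thus ?thesis by simp
qed

lemma ind01: "ind u f = 0 \<or> ind u f = 1" by (simp add: ind_def)

lemma G_fc:
  assumes I: "rinv s"
  shows "(\<Sum>u<nverts s. G j s u * real (fc s u)) = j * (\<Sum>u<nverts s. G j s u) - ob j s"
proof -
  have n3: "nverts s \<ge> 3" and D: "\<forall>u<nverts s. degree s u = fc s u + (if u < 3 then 1 else 0)"
    using I by (auto simp: rinv_def)
  have "(\<Sum>u<nverts s. G j s u * real (fc s u)) = (\<Sum>u<nverts s. G j s u * (real j - (if u < 3 then 1 else 0)))"
  proof (rule sum.cong[OF refl])
    fix u assume "u \<in> {..<nverts s}"
    hence "degree s u = fc s u + (if u < 3 then 1 else 0)" using D by auto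
    thus "G j s u * real (fc s u) = G j s u * (real j - (if u < 3 then 1 else 0))"
      by (auto simp: G_def)
  qed
  also have "\<dots> = (\<Sum>u<nverts s. real j * G j s u - (if u < 3 then G j s u else 0))"
    by (intro sum.cong) (auto simp: algebra_simps)
  also have "\<dots> = j * (\<Sum>u<nverts s. G j s u) - (\<Sum>u<nverts s. if u < 3 then G j s u else 0)"
    by (simp add: sum_subtractf sum_distrib_left)
  also have "(\<Sum>u<nverts s. if u < 3 then G j s u else 0) = ob j s"
  proof -
    have "(\<Sum>u<nverts s. if u < 3 then G j s u else 0) = (\<Sum>u\<in>{..<nverts s} \<inter> {u. u < 3}. G j s u)"
      by (simp add: sum.inter_restrict)
    also have "{..<nverts s} \<inter> {u. u < 3} = {..<3}" using n3 by auto
    finally show ?thesis by (simp add: ob_def)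
  qed
  finally show ?thesis .
qed

lemma Z_insert:
  assumes I: "rinv s" and i: "i < length (faces s)" and k: "k \<ge> 3"
  shows "real (Z k (ran_insert s i)) = (if k = 3 then 1 else 0) +
     (\<Sum>u<nverts s. G k s u - real (ind u (faces s ! i)) * G k s u
                              + real (ind u (faces s ! i)) * G (k - 1) s u)"
proof -
  obtain a b c where abc: "faces s ! i = (a,b,c)" by (metis prod_cases3)
  have nv: "nverts (ran_insert s i) = Suc (nverts s)" by (simp add: ran_insert_eq[OF abc])
  have "real (Z k (ran_insert s i)) = (\<Sum>u<nverts s. G k (ran_insert s i) u) + G k (ran_insert s i) (nverts s)"
    by (simp add: Z_sum nv)
  also have "G k (ran_insert s i) (nverts s) = (if k = 3 then 1 else 0)"
    by (auto simp: G_def degree_insert[OF I i])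
  also have "(\<Sum>u<nverts s. G k (ran_insert s i) u) = (\<Sum>u<nverts s. G k s u - real (ind u (faces s ! i)) * G k s u
                              + real (ind u (faces s ! i)) * G (k - 1) s u)"
  proof (rule sum.cong[OF refl])
    fix u assume "u \<in> {..<nverts s}"
    hence "degree (ran_insert s i) u = degree s u + ind u (faces s ! i)"
      by (simp add: degree_insert[OF I i] ind_def)
    thus "G k (ran_insert s i) u = G k s u - real (ind u (faces s ! i)) * G k s u
                              + real (ind u (faces s ! i)) * G (k - 1) s u"
      using ind01[of u "faces s ! i"] k by (auto simp: G_def)
  qed
  finally show ?thesis by simp
qed

lemma step_sum:
  assumes I: "rinv s" and k: "k \<ge> 3"
  shows "(\<Sum>i<length (faces s). real (Z k (ran_insert s i))) =
     length (faces s) * (real (Z k s) + (if k = 3 then 1 else 0))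
     - (k * real (Z k s) - ob k s) + ((k - 1) * real (Z (k-1) s) - ob (k-1) s)"
proof -
  define F where "F = length (faces s)"
  define n where "n = nverts s"
  have "(\<Sum>i<F. real (Z k (ran_insert s i))) =
     (\<Sum>i<F. (if k = 3 then 1 else 0) + ((\<Sum>u<n. G k s u) - (\<Sum>u<n. real (ind u (faces s ! i)) * G k s u)
                              + (\<Sum>u<n. real (ind u (faces s ! i)) * G (k - 1) s u)))"
    by (intro sum.cong refl) (simp add: Z_insert[OF I _ k] F_def n_def sum.distrib sum_subtractf)
  also have "\<dots> = F * ((if k = 3 then 1 else 0) + (\<Sum>u<n. G k s u))
       - (\<Sum>u<n. G k s u * (\<Sum>i<F. real (ind u (faces s ! i))))
       + (\<Sum>u<n. G (k-1) s u * (\<Sum>i<F. real (ind u (faces s ! i))))"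
    by (simp add: sum.distrib sum_subtractf sum_distrib_left sum.swap[of _ "{..<F}"] algebra_simps)
  also have "\<dots> = F * ((if k = 3 then 1 else 0) + (\<Sum>u<n. G k s u))
       - (\<Sum>u<n. G k s u * real (fc s u)) + (\<Sum>u<n. G (k-1) s u * real (fc s u))"
    by (simp add: fc_sum F_def)
  also have "\<dots> = F * ((if k = 3 then 1 else 0) + (\<Sum>u<n. G k s u))
       - (k * (\<Sum>u<n. G k s u) - ob k s) + (real (k - 1) * (\<Sum>u<n. G (k-1) s u) - ob (k-1) s)"
    using G_fc[OF I, of k] G_fc[OF I, of "k-1"] by (simp add: n_def)
  finally show ?thesis using k by (simp add: Z_sum F_def n_def algebra_simps)
qed



lemma len_faces: "rinv s \<Longrightarrow> length (faces s) = 2 * nverts s - 5" by (simp add: rinv_def)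

lemma len_pos: "rinv s \<Longrightarrow> length (faces s) > 0" by (simp add: rinv_def)

lemma set_ran_step: "rinv s \<Longrightarrow> set_pmf (ran_step s) = ran_insert s ` {..<length (faces s)}"
  unfolding ran_step_def
  by (subst set_map_pmf, subst set_pmf_of_set) (auto dest: len_pos)

lemma RAN_support: "finite (set_pmf (RAN t)) \<and> (\<forall>s\<in>set_pmf (RAN t). rinv s \<and> nverts s = t + 3)"
proof (induction t)
  case 0
  have "nverts ran_init = 3" by (simp add: ran_init_def)
  then show ?case using inv_init by simp
next
  case (Suc t)
  have "set_pmf (RAN (Suc t)) = (\<Union>s\<in>set_pmf (RAN t). ran_insert s ` {..<length (faces s)})"
    using Suc by (simp add: set_ran_step)
  moreover have "\<forall>s\<in>set_pmf (RAN t). \<forall>i<length (faces s). rinv (ran_insert s i) \<and> nverts (ran_insert s i) = Suc t + 3"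
  proof (intro ballI allI impI)
    fix s i assume s: "s \<in> set_pmf (RAN t)" and i: "i < length (faces s)"
    obtain a b c where abc: "faces s ! i = (a,b,c)" by (metis prod_cases3)
    have "rinv (ran_insert s i)" using Suc s i inv_insert by blast
    moreover have "nverts (ran_insert s i) = Suc t + 3" using Suc s by (simp add: ran_insert_eq[OF abc])
    ultimately show "rinv (ran_insert s i) \<and> nverts (ran_insert s i) = Suc t + 3" by blast
  qed
  ultimately show ?case using Suc by auto
qed

lemma int_bind_fin:
  fixes f :: "'b \<Rightarrow> real"
  assumes M: "finite (set_pmf M)" and N: "\<And>x. x \<in> set_pmf M \<Longrightarrow> finite (set_pmf (N x))"
  shows "measure_pmf.expectation (bind_pmf M N) f = measure_pmf.expectation M (\<lambda>x. measure_pmf.expectation (N x) f)"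
proof -
  define S where "S = (\<Union>x\<in>set_pmf M. set_pmf (N x))"
  have S: "finite S" using M N by (auto simp: S_def)
  have pb: "pmf (bind_pmf M N) a = (\<Sum>x\<in>set_pmf M. pmf (N x) a * pmf M x)" for a
    unfolding pmf_bind by (rule integral_measure_pmf_real[OF M]) auto
  have "measure_pmf.expectation (bind_pmf M N) f = (\<Sum>a\<in>S. f a * pmf (bind_pmf M N) a)"
    by (rule integral_measure_pmf_real[OF S]) (auto simp: S_def)
  also have "\<dots> = (\<Sum>x\<in>set_pmf M. (\<Sum>a\<in>S. f a * pmf (N x) a) * pmf M x)"
    by (simp add: pb sum_distrib_left sum_distrib_right sum.swap[of _ S] algebra_simps)
  also have "\<dots> = (\<Sum>x\<in>set_pmf M. measure_pmf.expectation (N x) f * pmf M x)"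
  proof (intro sum.cong refl)
    fix x assume x: "x \<in> set_pmf M"
    have "measure_pmf.expectation (N x) f = (\<Sum>a\<in>S. f a * pmf (N x) a)"
      by (rule integral_measure_pmf_real[OF S]) (use x in \<open>auto simp: S_def\<close>)
    thus "(\<Sum>a\<in>S. f a * pmf (N x) a) * pmf M x = measure_pmf.expectation (N x) f * pmf M x" by simp
  qed
  also have "\<dots> = measure_pmf.expectation M (\<lambda>x. measure_pmf.expectation (N x) f)"
    by (rule integral_measure_pmf_real[OF M, symmetric]) auto
  finally show ?thesis .
qed

lemma exp_step:
  assumes I: "rinv s"
  shows "measure_pmf.expectation (ran_step s) f =
          (\<Sum>i<length (faces s). f (ran_insert s i)) / length (faces s)"
  unfolding ran_step_def integral_map_pmf
  by (subst integral_pmf_of_set) (use len_pos[OF I] in auto)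

definition x :: "nat \<Rightarrow> nat \<Rightarrow> real" where
  "x k t = measure_pmf.expectation (RAN t) (\<lambda>s. real (Z k s))"
definition OB :: "nat \<Rightarrow> nat \<Rightarrow> real" where
  "OB k t = measure_pmf.expectation (RAN t) (ob k)"

lemma alg1: "(F::real) > 0 \<Longrightarrow> (F * (z + c) - a + b) / F = z + c - a / F + b / F"
  by (simp add: field_simps)

lemma x_rec:
  assumes k: "k \<ge> 3"
  shows "x k (Suc t) = x k t + (if k = 3 then 1 else 0)
      - (k * x k t - OB k t) / (2 * t + 1) + ((k - 1) * x (k - 1) t - OB (k - 1) t) / (2 * t + 1)"
proof -
  have fin: "finite (set_pmf (RAN t))" and rinv: "\<And>s. s \<in> set_pmf (RAN t) \<Longrightarrow> rinv s \<and> nverts s = t + 3"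
    using RAN_support by blast+
  have F: "\<And>s. s \<in> set_pmf (RAN t) \<Longrightarrow> length (faces s) = 2 * t + 1"
    using rinv len_faces by fastforce
  have "x k (Suc t) = measure_pmf.expectation (RAN t)
     (\<lambda>s. measure_pmf.expectation (ran_step s) (\<lambda>s. real (Z k s)))"
    unfolding x_def RAN.simps
    by (rule int_bind_fin[OF fin]) (simp add: rinv set_ran_step)
  also have "\<dots> = measure_pmf.expectation (RAN t)
     (\<lambda>s. real (Z k s) + (if k = 3 then 1 else 0) - (k * real (Z k s) - ob k s) / (2 * t + 1)
          + ((k - 1) * real (Z (k-1) s) - ob (k-1) s) / (2 * t + 1))"
  proof (intro integral_cong_AE AE_pmfI)
    fix s assume s: "s \<in> set_pmf (RAN t)"
    have I: "rinv s" using rinv s by blast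
    have L: "real (length (faces s)) = 2 * real t + 1" using F s by simp
    have pos: "2 * real t + 1 > 0" by simp
    show "measure_pmf.expectation (ran_step s) (\<lambda>s. real (Z k s)) =
       real (Z k s) + (if k = 3 then 1 else 0) - (k * real (Z k s) - ob k s) / (2 * t + 1)
          + ((k - 1) * real (Z (k-1) s) - ob (k-1) s) / (2 * t + 1)"
      unfolding exp_step[OF I] step_sum[OF I k] L using alg1[OF pos] k by (simp add: of_nat_diff add.commute)
  qed simp_all
  also have "\<dots> = x k t + (if k = 3 then 1 else 0)
      - (k * x k t - OB k t) / (2 * t + 1) + ((k - 1) * x (k - 1) t - OB (k - 1) t) / (2 * t + 1)"
    using fin unfolding x_def OB_def
    by (simp add: integrable_measure_pmf_finite Bochner_Integration.integral_add
         Bochner_Integration.integral_diff diff_divide_distrib)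
  finally show ?thesis using k by (simp add: of_nat_diff add.commute)
qed

lemma ob_nonneg: "0 \<le> ob j s" by (auto simp: ob_def G_def intro!: sum_nonneg)

lemma ob_sum: "j \<noteq> j' \<Longrightarrow> ob j s + ob j' s \<le> 3"
proof -
  assume "j \<noteq> j'"
  hence "ob j s + ob j' s = (\<Sum>u<3. G j s u + G j' s u)" by (simp add: ob_def sum.distrib)
  also have "\<dots> \<le> (\<Sum>u<(3::nat). 1)" using \<open>j \<noteq> j'\<close> by (intro sum_mono) (auto simp: G_def)
  finally show ?thesis by simp
qed

lemma OB_bounds: "j \<noteq> j' \<Longrightarrow> 0 \<le> OB j t \<and> OB j t + OB j' t \<le> 3"
proof -
  assume jj: "j \<noteq> j'"
  have fin: "finite (set_pmf (RAN t))" using RAN_support by blast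
  have "0 \<le> OB j t" unfolding OB_def by (rule integral_nonneg_AE) (simp add: ob_nonneg)
  moreover have "OB j t + OB j' t = measure_pmf.expectation (RAN t) (\<lambda>s. ob j s + ob j' s)"
    unfolding OB_def using fin by (simp add: integrable_measure_pmf_finite Bochner_Integration.integral_add)
  moreover have "\<dots> \<le> measure_pmf.expectation (RAN t) (\<lambda>s. 3)"
    using fin ob_sum[OF jj] by (intro integral_mono) (auto simp: integrable_measure_pmf_finite)
  ultimately show ?thesis by simp
qed

lemma Z2_ob: "rinv s \<Longrightarrow> real (Z 2 s) = ob 2 s"
proof -
  assume I: "rinv s"
  hence n3: "nverts s \<ge> 3" and d3: "\<And>u. 3 \<le> u \<Longrightarrow> u < nverts s \<Longrightarrow> degree s u \<ge> 3"
    by (auto simp: rinv_def)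
  have "real (Z 2 s) = (\<Sum>u<nverts s. G 2 s u)" by (rule Z_sum)
  also have "\<dots> = (\<Sum>u<3. G 2 s u)"
  proof (rule sum.mono_neutral_right)
    show "\<forall>i\<in>{..<nverts s} - {..<3}. G 2 s i = 0"
    proof
      fix i assume "i \<in> {..<nverts s} - {..<3}"
      hence "3 \<le> i" "i < nverts s" by auto
      hence "degree s i \<ge> 3" by (rule d3)
      thus "G 2 s i = 0" by (simp add: G_def)
    qed
  qed (use n3 in auto)
  finally show ?thesis by (simp add: ob_def)
qed

lemma x2: "x 2 t = OB 2 t"
  unfolding x_def OB_def
  by (intro integral_cong_AE AE_pmfI) (use RAN_support Z2_ob in auto)



lemma conv_lemma:
  fixes e h :: "nat \<Rightarrow> real" and K B :: real
  assumes K: "K \<ge> 1" and B: "B \<ge> 0"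
    and rec: "\<And>t. e (Suc t) = e t * (1 - K / (2 * real t + 1)) + h t / (2 * real t + 1)"
    and hb: "\<And>t. t \<ge> T \<Longrightarrow> \<bar>h t\<bar> \<le> K * B"
    and eta: "\<eta> > 0"
  shows "\<exists>T'. \<forall>t\<ge>T'. \<bar>e t\<bar> \<le> B + \<eta>"
proof -
  define T0 where "T0 = max (max T 1) (nat \<lceil>K\<rceil>)"
  have T0: "T0 \<ge> T" "T0 \<ge> 1" "real T0 \<ge> K"
    unfolding T0_def by (auto simp: of_nat_max) (meson le_max_iff_disj real_nat_ceiling_ge)
  define d where "d t = max (\<bar>e t\<bar> - B) 0" for t
  have dnn: "d t \<ge> 0" for t by (simp add: d_def)
  have dstep: "d (Suc t) \<le> d t * (2 * real t / (2 * real t + 1))" if t: "t \<ge> T0" for t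
  proof -
    define F where "F = 2 * real t + 1"
    have F: "F > 0" "F \<ge> K" using t T0 by (auto simp: F_def)
    have q1: "0 \<le> 1 - K / F" using F by (auto simp: field_simps)
    have "2 * real t / (2 * real t + 1) = 1 - 1 / F" by (simp add: F_def field_simps)
    moreover have "1 / F \<le> K / F" using K F by (intro divide_right_mono) auto
    ultimately have q2: "1 - K / F \<le> 2 * real t / (2 * real t + 1)" by linarith
    note q = q1 q2
    have r: "e (Suc t) = e t * (1 - K / F) + h t / F" using rec[of t] by (simp add: F_def)
    have "\<bar>e (Suc t)\<bar> \<le> \<bar>e t\<bar> * (1 - K / F) + \<bar>h t\<bar> / F"
      unfolding r using q F
      by (metis abs_divide abs_mult abs_of_nonneg abs_of_pos abs_triangle_ineq)
    also have "\<dots> \<le> \<bar>e t\<bar> * (1 - K / F) + K * B / F"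
      using hb[of t] t T0 F by (intro add_left_mono divide_right_mono) auto
    finally have "\<bar>e (Suc t)\<bar> - B \<le> (\<bar>e t\<bar> - B) * (1 - K / F)"
      using F by (simp add: field_simps)
    also have "\<dots> \<le> d t * (1 - K / F)" using q by (intro mult_right_mono) (auto simp: d_def)
    also have "\<dots> \<le> d t * (2 * real t / (2 * real t + 1))" using q dnn by (intro mult_left_mono) auto
    finally have "\<bar>e (Suc t)\<bar> - B \<le> d t * (2 * real t / (2 * real t + 1))" .
    moreover have "0 \<le> d t * (2 * real t / (2 * real t + 1))" using dnn by simp
    ultimately show ?thesis unfolding d_def[of "Suc t"] by (rule max.boundedI)
  qed
  have pot: "d t ^ 2 * t \<le> d T0 ^ 2 * T0" if "t \<ge> T0" for t
    using that
  proof (induction t rule: dec_induct)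
    case base then show ?case by simp
  next
    case (step t)
    have a: "d (Suc t) \<le> d t * (2 * real t / (2 * real t + 1))" using dstep step(1) by blast
    have b: "d (Suc t)^2 \<le> (d t * (2 * real t / (2 * real t + 1)))^2" by (rule power_mono[OF a dnn])
    have c: "(2 * real t / (2 * real t + 1))^2 * (real t + 1) \<le> t"
    proof -
      have L2: "(2 * real t / (2 * real t + 1))^2 * (real t + 1) = (2*real t)^2 * (real t+1) / (2*real t+1)^2"
        by (simp add: power_divide)
      have L3: "(2*real t)^2 * (real t+1) / (2*real t+1)^2 \<le> t"
        by (subst pos_divide_le_eq) (simp, simp add: power2_eq_square algebra_simps)
      show ?thesis using L2 L3 by simp
    qed
    have "d (Suc t)^2 * real (Suc t) \<le> (d t * (2 * real t / (2 * real t + 1)))^2 * (real t + 1)"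
      unfolding of_nat_Suc add.commute[of 1 "real t"] by (rule mult_right_mono[OF b]) simp
    also have "\<dots> = d t ^ 2 * ((2 * real t / (2 * real t + 1))^2 * (real t + 1))" by (simp only: power_mult_distrib mult.assoc)
    also have "\<dots> \<le> d t ^ 2 * t" using c by (intro mult_left_mono) auto
    also have "\<dots> \<le> d T0 ^ 2 * T0" using step by simp
    finally show ?case .
  qed
  define C where "C = d T0 ^ 2 * T0"
  define T' where "T' = max T0 (nat \<lceil>C / \<eta>^2\<rceil> + 1)"
  show ?thesis
  proof (intro exI allI impI)
    fix t assume t: "T' \<le> t"
    have tT0: "t \<ge> T0" using t by (simp add: T'_def)
    have h1: "nat \<lceil>C / \<eta>^2\<rceil> + 1 \<le> t" using t by (simp add: T'_def)
    hence "real (nat \<lceil>C / \<eta>^2\<rceil> + 1) \<le> real t" by (rule of_nat_mono)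
    hence "real t \<ge> real (nat \<lceil>C / \<eta>^2\<rceil>) + 1" by simp
    hence tC: "real t > C / \<eta>^2" using real_nat_ceiling_ge[of "C / \<eta>^2"] by linarith
    have tpos: "real t > 0" using tT0 T0 by simp
    have "C < real t * \<eta>^2" using tC eta by (simp add: pos_divide_less_eq)
    hence "C < \<eta>^2 * real t" by (metis mult.commute)
    moreover have "d t ^ 2 * real t \<le> C" using pot[OF tT0] by (simp add: C_def)
    ultimately have "d t ^ 2 * real t < \<eta>^2 * real t" by linarith
    hence "d t ^ 2 < \<eta>^2" using tpos by (rule mult_right_less_imp_less[OF _ less_imp_le])
    hence "d t < \<eta>" using eta power2_less_imp_less[of "d t" \<eta>] by simp
    thus "\<bar>e t\<bar> \<le> B + \<eta>" by (simp add: d_def)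
  qed
qed



lemma alg2:
  fixes F t xs x x' c b b' P P' k :: real
  assumes F: "F = 2 * t + 1" "F > 0"
    and xs: "xs = x + c - (k * x - P) / F + ((k - 1) * x' - P') / F"
    and st: "c - b = (k * b - (k - 1) * b') / 2"
  shows "xs - b * (t + 1) = (x - b * t) * (1 - k / F) + ((k - 1) * (x' - b' * t) + (P - P') + (k * b - (k - 1) * b') / 2) / F"
proof -
  have c: "c = b + (k * b - (k - 1) * b') / 2" using st by (simp add: field_simps)
  have t: "t = (F - 1) / 2" using F by simp
  define R where "R = ((k - 1) * (x' - b' * t) + (P - P') + (k * b - (k - 1) * b') / 2)"
  have "xs * F - b * (t + 1) * F = (x - b * t) * (F - k) + ((k - 1) * (x' - b' * t) + (P - P') + (k * b - (k - 1) * b') / 2)"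
    unfolding xs c t using F(2) by (simp add: field_simps)
  hence "(xs - b * (t + 1)) * F = (x - b * t) * (F - k) + R" by (simp add: R_def algebra_simps)
  hence "xs - b * (t + 1) = ((x - b * t) * (F - k) + R) / F" using F(2) by (simp add: eq_divide_eq)
  also have "\<dots> = (x - b * t) * (1 - k / F) + R / F" using F(2) by (simp add: add_divide_distrib field_simps)
  finally show ?thesis by (simp add: R_def)
qed

definition bk :: "nat \<Rightarrow> real" where
  "bk k = (if k \<le> 2 then 0 else 24 / (real k * (real k + 1) * (real k + 2)))"

definition ek :: "nat \<Rightarrow> nat \<Rightarrow> real" where
  "ek k t = x k t - bk k * real t"

definition hk :: "nat \<Rightarrow> nat \<Rightarrow> real" where
  "hk k t = (real k - 1) * ek (k - 1) t + (OB k t - OB (k - 1) t)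
     + (real k * bk k - (real k - 1) * bk (k - 1)) / 2"

lemma stat:
  assumes k: "k \<ge> 3"
  shows "(if k = 3 then 1 else 0) - bk k = (real k * bk k - (real k - 1) * bk (k - 1)) / 2"
proof (cases "k = 3")
  case True
  then show ?thesis by (simp add: bk_def)
next
  case False
  hence k4: "k \<ge> 4" using k by simp
  have rk: "real (k - 1) = real k - 1" using k by (simp add: of_nat_diff)
  have p1: "real k - 1 > 0" "real k > 0" using k4 by auto
  have bk1: "bk (k - 1) = 24 / ((real k - 1) * real k * (real k + 1))"
  proof -
    have "\<not> k - 1 \<le> 2" using k4 by simp
    hence e: "bk (k - 1) = 24 / (real (k - 1) * (real (k - 1) + 1) * (real (k - 1) + 2))" by (simp add: bk_def)
    have "real (k - 1) + 1 = real k" "real (k - 1) + 2 = real k + 1" using rk by simp_all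
    thus ?thesis using e rk by simp
  qed
  have A: "(real k - 1) * bk (k - 1) = 24 / (real k * (real k + 1))"
  proof -
    have "(real k - 1) * bk (k - 1) = ((real k - 1) * 24) / ((real k - 1) * (real k * (real k + 1)))"
      unfolding bk1 by (simp only: times_divide_eq_right mult.assoc)
    also have "\<dots> = 24 / (real k * (real k + 1))"
      using p1 by (intro nonzero_mult_divide_mult_cancel_left) simp
    finally show ?thesis .
  qed
  have B: "real k * bk k = 24 / ((real k + 1) * (real k + 2))"
  proof -
    have "real k * bk k = (real k * 24) / (real k * ((real k + 1) * (real k + 2)))"
      using k4 unfolding bk_def by (simp only: times_divide_eq_right mult.assoc if_not_P not_le)
    also have "\<dots> = 24 / ((real k + 1) * (real k + 2))"
      using p1 by (intro nonzero_mult_divide_mult_cancel_left) simp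
    finally show ?thesis .
  qed
  have C: "bk k = 24 / (real k * (real k + 1) * (real k + 2))" using k4 by (simp add: bk_def)
  have "24 / ((real k + 1) * (real k + 2)) - 24 / (real k * (real k + 1)) = - 2 * (24 / (real k * (real k + 1) * (real k + 2)))"
  proof -
    have q: "real k + 1 > 0" "real k + 2 > 0" using p1 by auto
    have e1: "24 / ((real k + 1) * (real k + 2)) = (real k * 24) / (real k * ((real k + 1) * (real k + 2)))"
      using p1 by (intro nonzero_mult_divide_mult_cancel_left[symmetric]) simp
    have e2: "24 / (real k * (real k + 1)) = ((real k + 2) * 24) / ((real k + 2) * (real k * (real k + 1)))"
      using q by (intro nonzero_mult_divide_mult_cancel_left[symmetric]) simp
    define D where "D = real k * (real k + 1) * (real k + 2)"
    have d1: "real k * ((real k + 1) * (real k + 2)) = D" "(real k + 2) * (real k * (real k + 1)) = D"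
      by (simp_all add: D_def algebra_simps)
    have "real k * 24 / D - (real k + 2) * 24 / D = - 2 * (24 / D)"
      by (simp add: diff_divide_distrib[symmetric] algebra_simps)
    thus ?thesis unfolding e1 e2 d1 D_def .
  qed
  thus ?thesis unfolding A B using False C by simp
qed

lemma e_rec:
  assumes k: "k \<ge> 3"
  shows "ek k (Suc t) = ek k t * (1 - real k / (2 * real t + 1)) + hk k t / (2 * real t + 1)"
proof -
  have "x k (Suc t) - bk k * (real t + 1) = (x k t - bk k * real t) * (1 - real k / (2 * real t + 1))
    + ((real k - 1) * (x (k - 1) t - bk (k - 1) * real t) + (OB k t - OB (k - 1) t)
       + (real k * bk k - (real k - 1) * bk (k - 1)) / 2) / (2 * real t + 1)"
    by (rule alg2[OF refl _ x_rec[OF k] stat[OF k]]) simp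
  thus ?thesis unfolding ek_def hk_def of_nat_Suc add.commute[of 1 "real t"] .
qed

lemma hk3: "\<bar>hk 3 t\<bar> \<le> 36 / 10"
proof -
  have "ek 2 t = OB 2 t" by (simp add: ek_def bk_def x2)
  hence "hk 3 t = OB 2 t + OB 3 t + 6 / 10" by (simp add: hk_def bk_def)
  moreover have "0 \<le> OB 2 t" "OB 2 t + OB 3 t \<le> 3" "0 \<le> OB 3 t" using OB_bounds[of 2 3 t] OB_bounds[of 3 2 t] by auto
  ultimately show ?thesis by linarith
qed

lemma hk_ge4:
  assumes k: "k \<ge> 4"
  shows "\<bar>hk k t\<bar> \<le> (real k - 1) * \<bar>ek (k - 1) t\<bar> + 32 / 10"
proof -
  have r: "(real k * bk k - (real k - 1) * bk (k - 1)) / 2 = - bk k"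
    using stat[of k] k by simp
  have kk: "real k * (real k + 1) * (real k + 2) \<ge> 120"
  proof -
    have "real k \<ge> 4" using k by simp
    hence "real k * (real k + 1) \<ge> 4 * 5" by (intro mult_mono) auto
    hence "real k * (real k + 1) * (real k + 2) \<ge> (4 * 5) * 6" by (intro mult_mono) (use \<open>real k \<ge> 4\<close> in auto)
    thus ?thesis by simp
  qed
  have b0: "0 \<le> bk k" and b1: "bk k \<le> 2 / 10"
    using k kk by (auto simp: bk_def divide_le_eq)
  have kn: "k \<noteq> k - 1" using k by simp
  have o: "\<bar>OB k t - OB (k - 1) t\<bar> \<le> 3" using OB_bounds[OF kn, of t] OB_bounds[OF kn[symmetric], of t] by linarith
  have "\<bar>(real k - 1) * ek (k - 1) t\<bar> = (real k - 1) * \<bar>ek (k - 1) t\<bar>" using k by (simp add: abs_mult)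
  thus ?thesis unfolding hk_def r using o b0 b1 by linarith
qed

lemma main_ind:
  assumes k: "k \<ge> 3"
  shows "\<forall>\<eta>>0. \<exists>T. \<forall>t\<ge>T. \<bar>ek k t\<bar> \<le> 32 / 10 + \<eta>"
  using k
proof (induction k rule: nat_induct_at_least)
  case base
  show ?case
  proof (intro allI impI)
    fix \<eta> :: real assume "\<eta> > 0"
    have hb: "\<And>t. 0 \<le> t \<Longrightarrow> \<bar>hk 3 t\<bar> \<le> 3 * (32 / 10)" by (rule order_trans[OF hk3]) simp
    have er: "\<And>t. ek 3 (Suc t) = ek 3 t * (1 - 3 / (2 * real t + 1)) + hk 3 t / (2 * real t + 1)"
      using e_rec[of 3] by simp
    show "\<exists>T. \<forall>t\<ge>T. \<bar>ek 3 t\<bar> \<le> 32 / 10 + \<eta>"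
      by (rule conv_lemma[where K = 3 and T = 0 and h = "hk 3", OF _ _ er hb \<open>\<eta> > 0\<close>]) auto
  qed
next
  case (Suc k)
  show ?case
  proof (intro allI impI)
    fix \<eta> :: real assume eta: "\<eta> > 0"
    obtain T where T: "\<And>t. t \<ge> T \<Longrightarrow> \<bar>ek k t\<bar> \<le> 32 / 10 + \<eta> / 2"
      using Suc.IH eta by (meson half_gt_zero)
    have hb: "\<bar>hk (Suc k) t\<bar> \<le> real (Suc k) * (32 / 10 + \<eta> / 2)" if "t \<ge> T" for t
    proof -
      have "\<bar>hk (Suc k) t\<bar> \<le> (real (Suc k) - 1) * \<bar>ek k t\<bar> + 32 / 10"
        using hk_ge4[of "Suc k" t] Suc.hyps by simp
      also have "\<dots> \<le> real k * (32 / 10 + \<eta> / 2) + 32 / 10"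
        using T[OF that] by (simp add: mult_left_mono)
      also have "\<dots> \<le> real (Suc k) * (32 / 10 + \<eta> / 2)"
      proof -
        have "real (Suc k) * (32 / 10 + \<eta> / 2) = real k * (32 / 10 + \<eta> / 2) + (32 / 10 + \<eta> / 2)"
          by (simp add: distrib_right)
        thus ?thesis using eta by linarith
      qed
      finally show ?thesis .
    qed
    have eq: "(32 / 10 + \<eta> / 2) + \<eta> / 2 = 32 / 10 + \<eta>" by simp
    have "\<exists>T'. \<forall>t\<ge>T'. \<bar>ek (Suc k) t\<bar> \<le> (32 / 10 + \<eta> / 2) + \<eta> / 2"
      by (rule conv_lemma[where K = "real (Suc k)" and T = T and h = "hk (Suc k)", OF _ _ e_rec hb])
         (use Suc.hyps eta in auto)
    thus "\<exists>T. \<forall>t\<ge>T. \<bar>ek (Suc k) t\<bar> \<le> 32 / 10 + \<eta>" unfolding eq .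
  qed
qed

theorem part1:
  assumes k: "k \<ge> 3"
  shows "\<exists>b::real. \<exists>T::nat. \<forall>t\<ge>T.
            \<bar>measure_pmf.expectation (RAN t) (\<lambda>s. real (Z k s)) - b * real t\<bar> \<le> 3.6"
proof -
  have "(4 / 10 :: real) > 0" by simp
  then obtain T where "\<forall>t\<ge>T. \<bar>ek k t\<bar> \<le> 32 / 10 + 4 / 10"
    using main_ind[OF k] by blast
  hence "\<forall>t\<ge>T. \<bar>measure_pmf.expectation (RAN t) (\<lambda>s. real (Z k s)) - bk k * real t\<bar> \<le> 3.6"
    by (simp add: ek_def x_def)
  thus ?thesis by blast
qed



fun runs :: "ran_state \<Rightarrow> nat list \<Rightarrow> ran_state" where
  "runs s [] = s"
| "runs s (i # is) = runs (ran_insert s i) is"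

fun valid :: "nat \<Rightarrow> nat list \<Rightarrow> bool" where
  "valid L [] = True"
| "valid L (z # zs) = (z < L \<and> valid (L + 2) zs)"

fun d1 :: "nat list \<Rightarrow> nat list \<Rightarrow> bool" where
  "d1 [] [] = True"
| "d1 (xa # xs) (ya # ys) = (if xa = ya then d1 xs ys else xs = ys)"
| "d1 _ _ = False"

definition cr :: "nat set \<Rightarrow> nat \<Rightarrow> nat \<Rightarrow> bool" where
  "cr B u u' \<longleftrightarrow> u = u' \<or> (u \<in> B \<and> u' \<in> B)"

definition frel :: "nat set \<Rightarrow> nat \<times> nat \<times> nat \<Rightarrow> nat \<times> nat \<times> nat \<Rightarrow> bool" where
  "frel B f f' = (case f of (a, b, c) \<Rightarrow> case f' of (a', b', c') \<Rightarrow> cr B a a' \<and> cr B b b' \<and> cr B c c')"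

definition rel :: "nat set \<Rightarrow> ran_state \<Rightarrow> ran_state \<Rightarrow> bool" where
  "rel B X Y \<longleftrightarrow> nverts X = nverts Y \<and> length (faces X) = length (faces Y) \<and> rinv X \<and> rinv Y
     \<and> finite B \<and> (\<forall>u\<in>B. u < nverts X)
     \<and> (\<forall>p < length (faces X). frel B (faces X ! p) (faces Y ! p))
     \<and> (\<forall>u. u \<notin> B \<longrightarrow> degree X u = degree Y u)"

lemma len_insert: "i < length (faces s) \<Longrightarrow> length (faces (ran_insert s i)) = length (faces s) + 2"
  by (cases "faces s ! i") (simp add: ran_insert_eq)

lemma nverts_insert: "nverts (ran_insert s i) = Suc (nverts s)"
  by (cases "faces s ! i") (simp add: ran_insert_eq)

lemma frel_tset: "frel B f f' \<Longrightarrow> u \<notin> B \<Longrightarrow> (u \<in> tset f \<longleftrightarrow> u \<in> tset f')"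
  by (cases f; cases f') (auto simp: frel_def cr_def tset_def)

lemma rel_insert:
  assumes R: "rel B X Y" and i: "i < length (faces X)"
  shows "rel B (ran_insert X i) (ran_insert Y i)"
proof -
  obtain a b c where abc: "faces X ! i = (a,b,c)" by (metis prod_cases3)
  obtain a' b' c' where abc': "faces Y ! i = (a',b',c')" by (metis prod_cases3)
  have R1: "nverts X = nverts Y" "length (faces X) = length (faces Y)" "rinv X" "rinv Y" "finite B"
    "\<forall>u\<in>B. u < nverts X" "\<forall>p < length (faces X). frel B (faces X ! p) (faces Y ! p)"
    "\<forall>u. u \<notin> B \<longrightarrow> degree X u = degree Y u" using R unfolding rel_def by blast+
  define v where "v = nverts X"
  have iY: "i < length (faces Y)" using i R1 by simp
  have fi: "frel B (a,b,c) (a',b',c')" using R1(7) i abc abc' by metis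
  hence cab: "cr B a a'" "cr B b b'" "cr B c c'" by (auto simp: frel_def)
  have FX: "faces (ran_insert X i) = (faces X)[i := (a, b, v)] @ [(a, v, c), (v, b, c)]"
    by (simp add: ran_insert_eq[OF abc] v_def)
  have FY: "faces (ran_insert Y i) = (faces Y)[i := (a', b', v)] @ [(a', v, c'), (v, b', c')]"
    by (simp add: ran_insert_eq[OF abc'] v_def R1(1))
  have fr: "\<forall>p < length (faces (ran_insert X i)). frel B (faces (ran_insert X i) ! p) (faces (ran_insert Y i) ! p)"
  proof (intro allI impI)
    fix p assume p: "p < length (faces (ran_insert X i))"
    hence "p < length (faces X) \<or> p = length (faces X) \<or> p = length (faces X) + 1"
      by (auto simp: FX)
    moreover have "cr B v v" by (simp add: cr_def)
    ultimately show "frel B (faces (ran_insert X i) ! p) (faces (ran_insert Y i) ! p)"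
      using R1(2,7) cab i unfolding FX FY
      by (auto simp: nth_append nth_list_update frel_def)
  qed
  have dg: "\<forall>u. u \<notin> B \<longrightarrow> degree (ran_insert X i) u = degree (ran_insert Y i) u"
  proof (intro allI impI)
    fix u assume u: "u \<notin> B"
    have "u \<in> tset (faces X ! i) \<longleftrightarrow> u \<in> tset (faces Y ! i)"
      using frel_tset[OF _ u] R1(7) i by blast
    thus "degree (ran_insert X i) u = degree (ran_insert Y i) u"
      using u R1 by (simp add: degree_insert[OF R1(3) i] degree_insert[OF R1(4) iY])
  qed
  show ?thesis unfolding rel_def
    using R1 fr dg inv_insert[OF R1(3) i] inv_insert[OF R1(4) iY] i iY
    by (auto simp: nverts_insert len_insert less_Suc_eq)
qed

lemma rel_runs: "rel B X Y \<Longrightarrow> valid (length (faces X)) zs \<Longrightarrow> rel B (runs X zs) (runs Y zs)"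
proof (induction zs arbitrary: X Y)
  case Nil
  then show ?case by simp
next
  case (Cons z zs)
  have z: "z < length (faces X)" using Cons by simp
  have "rel B (ran_insert X z) (ran_insert Y z)" using rel_insert[OF Cons.prems(1) z] .
  moreover have "valid (length (faces (ran_insert X z))) zs" using Cons z by (simp add: len_insert)
  ultimately show ?case using Cons.IH by simp
qed

lemma rel_Z:
  assumes R: "rel B X Y"
  shows "\<bar>real (Z k X) - real (Z k Y)\<bar> \<le> card B"
proof -
  have n: "nverts X = nverts Y" and fB: "finite B" and d: "\<And>u. u \<notin> B \<Longrightarrow> degree X u = degree Y u"
    using R by (auto simp: rel_def)
  have "real (Z k X) - real (Z k Y) = (\<Sum>u<nverts X. G k X u - G k Y u)"
    by (simp add: Z_sum n sum_subtractf)
  also have "\<bar>\<dots>\<bar> \<le> (\<Sum>u<nverts X. \<bar>G k X u - G k Y u\<bar>)" by (rule sum_abs)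
  also have "\<dots> = (\<Sum>u\<in>{..<nverts X} \<inter> B. \<bar>G k X u - G k Y u\<bar>)"
    by (rule sum.mono_neutral_right) (auto simp: d G_def)
  also have "\<dots> \<le> (\<Sum>u\<in>{..<nverts X} \<inter> B. 1)"
    by (intro sum_mono) (auto simp: G_def)
  also have "\<dots> = card ({..<nverts X} \<inter> B)" by simp
  also have "\<dots> \<le> real (card B)" using card_mono[OF fB, of "{..<nverts X} \<inter> B"] by auto
  finally show ?thesis by simp
qed

lemma finite_tset[simp]: "finite (tset f)"
  by (cases f) (simp add: tset_def)

lemma card_tset: "card (tset f) \<le> 3"
  by (cases f) (auto simp: tset_def card_insert_le_m1)

lemma rel_start:
  assumes I: "rinv S" and xa: "xa < length (faces S)" and ya: "ya < length (faces S)"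
  shows "rel (tset (faces S ! xa) \<union> tset (faces S ! ya) \<union> {nverts S}) (ran_insert S xa) (ran_insert S ya)"
proof -
  define B where "B = tset (faces S ! xa) \<union> tset (faces S ! ya) \<union> {nverts S}"
  define v where "v = nverts S"
  define L where "L = length (faces S)"
  obtain a b c where abc: "faces S ! xa = (a,b,c)" by (metis prod_cases3)
  obtain d e f where def: "faces S ! ya = (d,e,f)" by (metis prod_cases3)
  have fv: "\<forall>f\<in>set (faces S). \<forall>u\<in>tset f. u < v" using I by (auto simp: rinv_def v_def)
  have Bv: "\<forall>u\<in>B. u < Suc v" using fv xa ya by (auto simp: B_def v_def less_Suc_eq dest!: nth_mem)
  have inB: "a \<in> B" "b \<in> B" "c \<in> B" "d \<in> B" "e \<in> B" "f \<in> B" "v \<in> B"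
    by (auto simp: B_def abc def tset_def v_def)
  have FX: "faces (ran_insert S xa) = (faces S)[xa := (a, b, v)] @ [(a, v, c), (v, b, c)]"
    by (simp add: ran_insert_eq[OF abc] v_def)
  have FY: "faces (ran_insert S ya) = (faces S)[ya := (d, e, v)] @ [(d, v, f), (v, e, f)]"
    by (simp add: ran_insert_eq[OF def] v_def)
  have frefl: "frel B g g" for g by (cases g) (auto simp: frel_def cr_def)
  have fr: "\<forall>p < length (faces (ran_insert S xa)). frel B (faces (ran_insert S xa) ! p) (faces (ran_insert S ya) ! p)"
  proof (intro allI impI)
    fix p assume p: "p < length (faces (ran_insert S xa))"
    hence "p < L \<or> p = L \<or> p = L + 1" by (auto simp: FX L_def)
    thus "frel B (faces (ran_insert S xa) ! p) (faces (ran_insert S ya) ! p)"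
      using inB xa ya frefl[of "faces S ! p"] abc def unfolding FX FY L_def
      by (auto simp: nth_append nth_list_update frel_def cr_def)
  qed
  have dg: "\<forall>u. u \<notin> B \<longrightarrow> degree (ran_insert S xa) u = degree (ran_insert S ya) u"
    using inB by (auto simp: degree_insert[OF I xa] degree_insert[OF I ya] B_def v_def)
  have "rel B (ran_insert S xa) (ran_insert S ya)" unfolding rel_def
    using fr dg inv_insert[OF I xa] inv_insert[OF I ya] Bv xa ya
    by (auto simp: nverts_insert len_insert B_def v_def)
  thus ?thesis by (simp add: B_def)
qed

lemma coupling:
  assumes "rinv s" "valid (length (faces s)) xs" "valid (length (faces s)) ys" "d1 xs ys"
  shows "\<bar>real (Z k (runs s xs)) - real (Z k (runs s ys))\<bar> \<le> 7"
  using assms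
proof (induction xs arbitrary: ys s)
  case Nil
  then show ?case by (cases ys) auto
next
  case (Cons xa xs)
  obtain ya ys' where ys: "ys = ya # ys'" using Cons.prems(4) by (cases ys) auto
  have xa: "xa < length (faces s)" and ya: "ya < length (faces s)" using Cons.prems ys by auto
  show ?case
  proof (cases "xa = ya")
    case True
    have "rinv (ran_insert s xa)" using inv_insert[OF Cons.prems(1) xa] .
    moreover have "valid (length (faces (ran_insert s xa))) xs" "valid (length (faces (ran_insert s xa))) ys'"
      using Cons.prems ys xa by (auto simp: len_insert)
    moreover have "d1 xs ys'" using Cons.prems(4) ys True by simp
    ultimately show ?thesis using Cons.IH ys True by simp
  next
    case False
    hence eq: "ys' = xs" using Cons.prems(4) ys by simp
    define B where "B = tset (faces s ! xa) \<union> tset (faces s ! ya) \<union> {nverts s}"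
    have R: "rel B (ran_insert s xa) (ran_insert s ya)" unfolding B_def by (rule rel_start[OF Cons.prems(1) xa ya])
    have "valid (length (faces (ran_insert s xa))) xs" using Cons.prems xa by (simp add: len_insert)
    hence "rel B (runs (ran_insert s xa) xs) (runs (ran_insert s ya) xs)" by (rule rel_runs[OF R])
    hence "\<bar>real (Z k (runs (ran_insert s xa) xs)) - real (Z k (runs (ran_insert s ya) xs))\<bar> \<le> card B"
      by (rule rel_Z)
    also have "card B \<le> 7"
    proof -
      have "card B \<le> card (tset (faces s ! xa) \<union> tset (faces s ! ya)) + card {nverts s}"
        unfolding B_def by (rule card_Un_le)
      also have "card (tset (faces s ! xa) \<union> tset (faces s ! ya)) \<le> card (tset (faces s ! xa)) + card (tset (faces s ! ya))"
        by (rule card_Un_le)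
      finally show ?thesis using card_tset[of "faces s ! xa"] card_tset[of "faces s ! ya"] by simp
    qed
    finally show ?thesis using ys eq by simp
  qed
qed



fun lst :: "nat list \<Rightarrow> nat list pmf" where
  "lst [] = return_pmf []"
| "lst (n # ns) = bind_pmf (pmf_of_set {..<n}) (\<lambda>i. map_pmf (Cons i) (lst ns))"

fun sz :: "nat \<Rightarrow> nat \<Rightarrow> nat list" where
  "sz L 0 = []"
| "sz L (Suc m) = L # sz (L + 2) m"

lemma set_U[simp]: "(n::nat) > 0 \<Longrightarrow> set_pmf (pmf_of_set {..<n}) = {..<n}"
  by (rule set_pmf_of_set) auto

primrec steps :: "nat \<Rightarrow> ran_state \<Rightarrow> ran_state pmf" where
  "steps 0 s = return_pmf s"
| "steps (Suc m) s = bind_pmf (ran_step s) (steps m)"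

lemma steps_Suc': "steps (Suc m) s = bind_pmf (steps m s) ran_step"
proof (induction m arbitrary: s)
  case 0
  have "steps 0 = return_pmf" by (rule ext) simp
  then show ?case by (simp add: bind_return_pmf bind_return_pmf')
next
  case (Suc m)
  have IH': "steps (Suc m) = (\<lambda>s'. bind_pmf (steps m s') ran_step)"
    by (intro ext) (rule Suc.IH)
  have "steps (Suc (Suc m)) s = bind_pmf (ran_step s) (\<lambda>s'. bind_pmf (steps m s') ran_step)"
    by (simp only: steps.simps(2) IH')
  also have "\<dots> = bind_pmf (bind_pmf (ran_step s) (steps m)) ran_step" by (simp add: bind_assoc_pmf)
  finally show ?case by simp
qed

lemma RAN_steps: "RAN t = steps t ran_init"
  by (induction t) (simp_all add: steps_Suc' del: steps.simps(2))

lemma steps_rep: "rinv s \<Longrightarrow> steps m s = map_pmf (runs s) (lst (sz (length (faces s)) m))"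
proof (induction m arbitrary: s)
  case 0
  then show ?case by simp
next
  case (Suc m)
  define L where "L = length (faces s)"
  have L: "L > 0" using len_pos[OF Suc.prems] by (simp add: L_def)
  have "steps (Suc m) s = bind_pmf (pmf_of_set {..<L}) (\<lambda>i. steps m (ran_insert s i))"
    by (simp add: ran_step_def bind_map_pmf L_def)
  also have "\<dots> = bind_pmf (pmf_of_set {..<L}) (\<lambda>i. map_pmf (runs (ran_insert s i)) (lst (sz (L + 2) m)))"
  proof (rule bind_pmf_cong[OF refl])
    fix i assume "i \<in> set_pmf (pmf_of_set {..<L})"
    hence i: "i < L" using L by simp
    show "steps m (ran_insert s i) = map_pmf (runs (ran_insert s i)) (lst (sz (L + 2) m))"
      using Suc.IH[OF inv_insert[OF Suc.prems i[unfolded L_def]]] len_insert[OF i[unfolded L_def]]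
      by (simp add: L_def)
  qed
  also have "\<dots> = map_pmf (runs s) (lst (sz L (Suc m)))"
    by (simp add: map_bind_pmf map_pmf_comp)
  finally show ?case by (simp add: L_def)
qed

definition pos :: "nat list \<Rightarrow> bool" where "pos ns \<longleftrightarrow> (\<forall>n\<in>set ns. n > 0)"

lemma pos_sz: "L > 0 \<Longrightarrow> pos (sz L m)"
  by (induction m arbitrary: L) (auto simp: pos_def)

lemma set_lst_Cons: "n > 0 \<Longrightarrow> set_pmf (lst (n # ns)) = (\<Union>i<n. Cons i ` set_pmf (lst ns))"
  by simp

lemma finite_lst: "pos ns \<Longrightarrow> finite (set_pmf (lst ns))"
  by (induction ns) (auto simp: pos_def)

lemma valid_lst: "L > 0 \<Longrightarrow> xs \<in> set_pmf (lst (sz L m)) \<Longrightarrow> valid L xs"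
  by (induction m arbitrary: L xs) auto

lemma exp_lst_Cons:
  fixes h :: "nat list \<Rightarrow> real"
  assumes "pos (n # ns)"
  shows "measure_pmf.expectation (lst (n # ns)) h =
     measure_pmf.expectation (pmf_of_set {..<n}) (\<lambda>i. measure_pmf.expectation (lst ns) (\<lambda>zs. h (i # zs)))"
proof -
  have n: "n > 0" and p: "pos ns" using assms by (auto simp: pos_def)
  have "measure_pmf.expectation (lst (n # ns)) h =
     measure_pmf.expectation (pmf_of_set {..<n}) (\<lambda>i. measure_pmf.expectation (map_pmf (Cons i) (lst ns)) h)"
    unfolding lst.simps by (rule int_bind_fin) (use n finite_lst[OF p] in auto)
  thus ?thesis by simp
qed

definition BD :: "real \<Rightarrow> nat list \<Rightarrow> (nat list \<Rightarrow> real) \<Rightarrow> bool" where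
  "BD c ns f \<longleftrightarrow> (\<forall>xs\<in>set_pmf (lst ns). \<forall>ys\<in>set_pmf (lst ns). d1 xs ys \<longrightarrow> \<bar>f xs - f ys\<bar> \<le> c)"

lemma hoeff_pmf:
  fixes g :: "'a \<Rightarrow> real"
  assumes fin: "finite (set_pmf M)" and bd: "\<And>x. x \<in> set_pmf M \<Longrightarrow> a \<le> g x \<and> g x \<le> a + c"
    and l: "l > 0"
  shows "measure_pmf.expectation M (\<lambda>x. exp (l * (g x - measure_pmf.expectation M g))) \<le> exp (l\<^sup>2 * c\<^sup>2 / 8)"
proof -
  have "interval_bounded_random_variable (measure_pmf M) g a (a + c)"
    unfolding interval_bounded_random_variable_def interval_bounded_random_variable_axioms_def
    using prob_space_measure_pmf bd by (auto intro!: AE_pmfI)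
  from interval_bounded_random_variable.Hoeffdings_lemma_nn_integral[OF this l]
  have "(\<integral>\<^sup>+ x. ennreal (exp (l * (g x - measure_pmf.expectation M g))) \<partial>measure_pmf M)
        \<le> ennreal (exp (l\<^sup>2 * c\<^sup>2 / 8))" by simp
  also have "(\<integral>\<^sup>+ x. ennreal (exp (l * (g x - measure_pmf.expectation M g))) \<partial>measure_pmf M)
     = ennreal (measure_pmf.expectation M (\<lambda>x. exp (l * (g x - measure_pmf.expectation M g))))"
    by (rule nn_integral_eq_integral) (auto simp: integrable_measure_pmf_finite[OF fin])
  finally show ?thesis by (simp add: ennreal_le_iff)
qed

lemma mgf:
  assumes "pos ns" "BD c ns f" "l > 0" "c \<ge> 0"
  shows "measure_pmf.expectation (lst ns) (\<lambda>xs. exp (l * (f xs - measure_pmf.expectation (lst ns) f)))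
          \<le> exp (l\<^sup>2 * real (length ns) * c\<^sup>2 / 8)"
  using assms
proof (induction ns arbitrary: f)
  case Nil
  then show ?case by simp
next
  case (Cons n ns)
  have n: "n > 0" and p: "pos ns" using Cons.prems by (auto simp: pos_def)
  define U where "U = pmf_of_set {..<n}"
  define P where "P = lst ns"
  have finU: "finite (set_pmf U)" and setU: "set_pmf U = {..<n}" using n by (auto simp: U_def)
  have finP: "finite (set_pmf P)" using finite_lst[OF p] by (simp add: P_def)
  define g where "g i = measure_pmf.expectation P (\<lambda>zs. f (i # zs))" for i
  define \<mu> where "\<mu> = measure_pmf.expectation (lst (n # ns)) f"
  have mu: "\<mu> = measure_pmf.expectation U g"
    unfolding \<mu>_def g_def U_def P_def by (rule exp_lst_Cons[OF Cons.prems(1)])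
  define Q where "Q = exp (l\<^sup>2 * real (length ns) * c\<^sup>2 / 8)"
  have memb: "i < n \<Longrightarrow> zs \<in> set_pmf P \<Longrightarrow> i # zs \<in> set_pmf (lst (n # ns))" for i zs
    using n by (auto simp: P_def)
  have inner: "measure_pmf.expectation P (\<lambda>zs. exp (l * (f (i # zs) - \<mu>))) \<le> exp (l * (g i - \<mu>)) * Q"
    if i: "i < n" for i
  proof -
    have BD': "BD c ns (\<lambda>zs. f (i # zs))"
      unfolding BD_def
    proof (intro ballI impI)
      fix xs ys assume xs: "xs \<in> set_pmf (lst ns)" and ys: "ys \<in> set_pmf (lst ns)" and d: "d1 xs ys"
      have "d1 (i # xs) (i # ys)" using d by simp
      thus "\<bar>f (i # xs) - f (i # ys)\<bar> \<le> c"
        using Cons.prems(2) memb[OF i xs[folded P_def]] memb[OF i ys[folded P_def]] unfolding BD_def by blast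
    qed
    have IH: "measure_pmf.expectation P (\<lambda>zs. exp (l * (f (i # zs) - g i))) \<le> Q"
      using Cons.IH[OF p BD' Cons.prems(3,4)] by (simp add: P_def g_def Q_def)
    have "measure_pmf.expectation P (\<lambda>zs. exp (l * (f (i # zs) - \<mu>))) =
          measure_pmf.expectation P (\<lambda>zs. exp (l * (g i - \<mu>)) * exp (l * (f (i # zs) - g i)))"
      by (intro Bochner_Integration.integral_cong refl) (simp add: exp_add[symmetric] algebra_simps)
    also have "\<dots> = exp (l * (g i - \<mu>)) * measure_pmf.expectation P (\<lambda>zs. exp (l * (f (i # zs) - g i)))"
      by simp
    also have "\<dots> \<le> exp (l * (g i - \<mu>)) * Q" using IH by (intro mult_left_mono) auto
    finally show ?thesis .
  qed
  have "measure_pmf.expectation (lst (n # ns)) (\<lambda>xs. exp (l * (f xs - \<mu>)))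
      = measure_pmf.expectation U (\<lambda>i. measure_pmf.expectation P (\<lambda>zs. exp (l * (f (i # zs) - \<mu>))))"
    unfolding U_def P_def by (rule exp_lst_Cons[OF Cons.prems(1)])
  also have "\<dots> \<le> measure_pmf.expectation U (\<lambda>i. exp (l * (g i - \<mu>)) * Q)"
    by (intro integral_mono_AE AE_pmfI) (auto simp: integrable_measure_pmf_finite[OF finU] setU inner)
  also have "\<dots> = measure_pmf.expectation U (\<lambda>i. exp (l * (g i - \<mu>))) * Q" by simp
  also have "measure_pmf.expectation U (\<lambda>i. exp (l * (g i - \<mu>))) \<le> exp (l\<^sup>2 * c\<^sup>2 / 8)"
  proof -
    define a where "a = Min (g ` {..<n})"
    have gd: "g i \<le> g j + c" if "i < n" "j < n" for i j
    proof -
      have "g i \<le> measure_pmf.expectation P (\<lambda>zs. f (j # zs) + c)"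
        unfolding g_def
      proof (intro integral_mono_AE AE_pmfI)
        fix zs assume zs: "zs \<in> set_pmf P"
        have "d1 (i # zs) (j # zs)" by (induction zs) auto
        hence "\<bar>f (i # zs) - f (j # zs)\<bar> \<le> c"
          using Cons.prems(2) memb[OF that(1) zs] memb[OF that(2) zs] unfolding BD_def by blast
        thus "f (i # zs) \<le> f (j # zs) + c" by linarith
      qed (auto simp: integrable_measure_pmf_finite[OF finP])
      also have "\<dots> = g j + c" unfolding g_def
        by (subst Bochner_Integration.integral_add) (auto simp: integrable_measure_pmf_finite[OF finP])
      finally show ?thesis .
    qed
    have "a \<in> g ` {..<n}" unfolding a_def using n by (intro Min_in) auto
    then obtain j where j: "j < n" "g j = a" by auto
    have "\<forall>i\<in>set_pmf U. a \<le> g i \<and> g i \<le> a + c"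
    proof
      fix i assume "i \<in> set_pmf U"
      hence i: "i < n" by (simp add: setU)
      have "a \<le> g i" unfolding a_def by (rule Min_le) (use i in auto)
      moreover have "g i \<le> a + c" using gd[OF i j(1)] j(2) by simp
      ultimately show "a \<le> g i \<and> g i \<le> a + c" by simp
    qed
    from hoeff_pmf[OF finU _ Cons.prems(3), of a g c] this
    show ?thesis by (simp add: mu)
  qed
  hence "measure_pmf.expectation U (\<lambda>i. exp (l * (g i - \<mu>))) * Q \<le> exp (l\<^sup>2 * c\<^sup>2 / 8) * Q"
    by (intro mult_right_mono) (auto simp: Q_def)
  also have "\<dots> = exp (l\<^sup>2 * real (length (n # ns)) * c\<^sup>2 / 8)"
    by (simp add: Q_def exp_add[symmetric] algebra_simps add_divide_distrib)
  finally show ?case by (simp add: \<mu>_def)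
qed



lemma chern:
  fixes F :: "'a \<Rightarrow> real"
  assumes fin: "finite (set_pmf M)" and h: "h > 0"
  shows "measure_pmf.prob M {x. F x \<ge> l} \<le> exp (- h * l) * measure_pmf.expectation M (\<lambda>x. exp (h * F x))"
proof -
  have "measure_pmf.prob M {x. F x \<ge> l} = measure_pmf.expectation M (indicator {x. F x \<ge> l})"
    by (simp add: Bochner_Integration.integral_indicator)
  also have "\<dots> \<le> measure_pmf.expectation M (\<lambda>x. exp (- h * l) * exp (h * F x))"
  proof (intro integral_mono_AE AE_pmfI)
    fix x
    show "indicator {x. F x \<ge> l} x \<le> exp (- h * l) * exp (h * F x)"
    proof (cases "F x \<ge> l")
      case True
      have "h * l \<le> h * F x" using True h by simp
      hence "1 \<le> exp (- h * l + h * F x)" by simp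
      thus ?thesis using True by (simp add: mult_exp_exp)
    qed simp
  qed (auto simp: integrable_measure_pmf_finite[OF fin])
  also have "\<dots> = exp (- h * l) * measure_pmf.expectation M (\<lambda>x. exp (h * F x))" by simp
  finally show ?thesis .
qed

lemma one_side:
  assumes p: "pos ns" and bd: "BD c ns f" and c: "c > 0" and m: "length ns > 0" and l: "l > 0"
  shows "measure_pmf.prob (lst ns) {xs. f xs - measure_pmf.expectation (lst ns) f \<ge> l}
          \<le> exp (- 2 * l\<^sup>2 / (real (length ns) * c\<^sup>2))"
proof -
  define m where "m = real (length ns)"
  define \<mu> where "\<mu> = measure_pmf.expectation (lst ns) f"
  define h where "h = 4 * l / (m * c\<^sup>2)"
  have mpos: "m > 0" using m by (simp add: m_def)
  have h: "h > 0" using l c mpos by (simp add: h_def)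
  have "measure_pmf.prob (lst ns) {xs. f xs - \<mu> \<ge> l}
     \<le> exp (- h * l) * measure_pmf.expectation (lst ns) (\<lambda>xs. exp (h * (f xs - \<mu>)))"
    by (rule chern[OF finite_lst[OF p] h])
  also have "\<dots> \<le> exp (- h * l) * exp (h\<^sup>2 * m * c\<^sup>2 / 8)"
    using mgf[OF p bd h] c by (intro mult_left_mono) (auto simp: m_def \<mu>_def)
  also have "\<dots> = exp (- h * l + h\<^sup>2 * m * c\<^sup>2 / 8)" by (simp add: mult_exp_exp)
  also have "- h * l + h\<^sup>2 * m * c\<^sup>2 / 8 = - 2 * l\<^sup>2 / (m * c\<^sup>2)"
    using mpos c by (simp add: h_def field_simps power2_eq_square)
  finally show ?thesis by (simp add: m_def \<mu>_def)
qed

lemma two_side: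
  assumes p: "pos ns" and bd: "BD c ns f" and c: "c > 0" and m: "length ns > 0" and l: "l > 0"
  shows "measure_pmf.prob (lst ns) {xs. \<bar>f xs - measure_pmf.expectation (lst ns) f\<bar> \<ge> l}
          \<le> 2 * exp (- 2 * l\<^sup>2 / (real (length ns) * c\<^sup>2))"
proof -
  define \<mu> where "\<mu> = measure_pmf.expectation (lst ns) f"
  have bd': "BD c ns (\<lambda>xs. - f xs)" using bd unfolding BD_def by (auto simp: abs_minus_commute)
  have e': "measure_pmf.expectation (lst ns) (\<lambda>xs. - f xs) = - \<mu>" by (simp add: \<mu>_def)
  have "{xs. \<bar>f xs - \<mu>\<bar> \<ge> l} \<subseteq> {xs. f xs - \<mu> \<ge> l} \<union> {xs. - f xs - (- \<mu>) \<ge> l}" by auto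
  hence "measure_pmf.prob (lst ns) {xs. \<bar>f xs - \<mu>\<bar> \<ge> l}
      \<le> measure_pmf.prob (lst ns) ({xs. f xs - \<mu> \<ge> l} \<union> {xs. - f xs - (- \<mu>) \<ge> l})"
    by (intro measure_pmf.finite_measure_mono) auto
  also have "\<dots> \<le> measure_pmf.prob (lst ns) {xs. f xs - \<mu> \<ge> l} + measure_pmf.prob (lst ns) {xs. - f xs - (- \<mu>) \<ge> l}"
    by (rule measure_subadditive) (auto simp: measure_pmf.emeasure_eq_measure)
  also have "\<dots> \<le> exp (- 2 * l\<^sup>2 / (real (length ns) * c\<^sup>2)) + exp (- 2 * l\<^sup>2 / (real (length ns) * c\<^sup>2))"
    using one_side[OF p bd c m l] one_side[OF p bd' c m l] e' by (intro add_mono) (auto simp: \<mu>_def)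
  finally show ?thesis by (simp add: \<mu>_def)
qed

lemma len_sz: "length (sz L m) = m"
  by (induction m arbitrary: L) auto

lemma part2:
  assumes l: "l > 0"
  shows "measure_pmf.prob (RAN t)
              {s. \<bar>real (Z k s) - measure_pmf.expectation (RAN t) (\<lambda>s. real (Z k s))\<bar> \<ge> l}
            \<le> 2 * exp (- (l\<^sup>2 / (72 * real t)))"
proof (cases "t = 0")
  case True
  have "measure_pmf.prob (RAN t) {s. \<bar>real (Z k s) - measure_pmf.expectation (RAN t) (\<lambda>s. real (Z k s))\<bar> \<ge> l} \<le> 1"
    by (rule measure_pmf.prob_le_1)
  moreover have "2 * exp (- (l\<^sup>2 / (72 * real t))) = 2" using True by simp
  ultimately show ?thesis by linarith
next
  case False
  define ns where "ns = sz 1 t"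
  define f where "f xs = real (Z k (runs ran_init xs))" for xs
  have len1: "length (faces ran_init) = 1" by (simp add: ran_init_def)
  have R: "RAN t = map_pmf (runs ran_init) (lst ns)"
    unfolding RAN_steps ns_def using steps_rep[OF inv_init, of t] len1 by simp
  have p: "pos ns" unfolding ns_def by (rule pos_sz) simp
  have lenns: "length ns = t" unfolding ns_def by (rule len_sz)
  have bd: "BD 7 ns f" unfolding BD_def f_def
  proof (intro ballI impI)
    fix xs ys assume xs: "xs \<in> set_pmf (lst ns)" and ys: "ys \<in> set_pmf (lst ns)" and d: "d1 xs ys"
    have "valid 1 xs" "valid 1 ys" using valid_lst[of 1 xs t] valid_lst[of 1 ys t] xs ys by (auto simp: ns_def)
    thus "\<bar>real (Z k (runs ran_init xs)) - real (Z k (runs ran_init ys))\<bar> \<le> 7"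
      using coupling[OF inv_init _ _ d] len1 by simp
  qed
  have E: "measure_pmf.expectation (RAN t) (\<lambda>s. real (Z k s)) = measure_pmf.expectation (lst ns) f"
    unfolding R by (simp add: f_def[abs_def])
  have "measure_pmf.prob (RAN t)
              {s. \<bar>real (Z k s) - measure_pmf.expectation (RAN t) (\<lambda>s. real (Z k s))\<bar> \<ge> l}
      = measure_pmf.prob (lst ns) {xs. \<bar>f xs - measure_pmf.expectation (lst ns) f\<bar> \<ge> l}"
    unfolding E unfolding R measure_map_pmf by (simp add: f_def vimage_def)
  also have "\<dots> \<le> 2 * exp (- 2 * l\<^sup>2 / (real (length ns) * 7\<^sup>2))"
    by (rule two_side[OF p bd _ _ l]) (use False lenns in auto)
  also have "\<dots> \<le> 2 * exp (- (l\<^sup>2 / (72 * real t)))"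
  proof -
    have tp: "real t > 0" using False by simp
    have "l\<^sup>2 / (72 * real t) \<le> 2 * l\<^sup>2 / (real t * 7\<^sup>2)"
      using tp by (simp add: field_simps)
    thus ?thesis using lenns by simp
  qed
  finally show ?thesis .
qed

theorem theorem1:
  fixes k :: nat
  assumes "k \<ge> 3"
  shows "(\<exists>b::real. \<exists>T::nat. \<forall>t\<ge>T.
            \<bar>measure_pmf.expectation (RAN t) (\<lambda>s. real (Z k s)) - b * real t\<bar> \<le> 3.6)
       \<and> (\<forall>(l::real) t. l > 0 \<longrightarrow>
            measure_pmf.prob (RAN t)
              {s. \<bar>real (Z k s) - measure_pmf.expectation (RAN t) (\<lambda>s. real (Z k s))\<bar> \<ge> l}
            \<le> 2 * exp (- (l\<^sup>2 / (72 * real t))))"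
  using part1[OF assms] part2 by blast

end
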